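(* Let $\psi\in\mathfrak M^+_\infty$, $b>0$, and let $t\ge1$ be such that $\mu(\psi;t)\ge b$. Then $$\frac12\,\frac{b^2}{(b+1)^2}\,(\eta(t)-t)\le\frac{\psi(t)}{|\psi'(t)|}\le4\Big(1+\frac1b\Big)(\eta(t)-t),$$ where $\psi'(t)=\psi'(t+0)$ denotes the right derivative.
   Context: Let $\mathfrak M$ be the set of positive, continuous, convex-downward functions $\psi(t)$ of $t\ge1$ with $\lim_{t\to\infty}\psi(t)=0$. For $\psi\in\mathfrak M$ put $\eta(t)=\eta(\psi;t)=\psi^{-1}(\psi(t)/2)$, where $\psi^{-1}$ is the inverse function of $\psi$, and $\mu(t)=\mu(\psi;t)=t/(\eta(t)-t)$. Let $\mathfrak M^+_\infty$ be the set of $\psi\in\mathfrak M$ for which $\mu(\psi;t)$ increases monotonically to $\infty$ as $t\to\infty$. *)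

theory Defs
  imports "HOL-Analysis.Analysis"
begin

text \<open>The class M: positive, continuous, convex (downward) functions on [1,oo) tending to 0.
  Functions are total on the reals; only their values on [1,oo) matter.\<close>
definition class_M :: "(real \<Rightarrow> real) \<Rightarrow> bool" where
  "class_M \<psi> \<longleftrightarrow> (\<forall>t\<ge>1. \<psi> t > 0) \<and> continuous_on {1..} \<psi> \<and> convex_on {1..} \<psi>
      \<and> (\<psi> \<longlongrightarrow> 0) at_top"

definition eta :: "(real \<Rightarrow> real) \<Rightarrow> real \<Rightarrow> real" where
  "eta \<psi> t = the_inv_into {1..} \<psi> (\<psi> t / 2)"

definition mu :: "(real \<Rightarrow> real) \<Rightarrow> real \<Rightarrow> real" where
  "mu \<psi> t = t / (eta \<psi> t - t)"

definition class_M_plus_inf :: "(real \<Rightarrow> real) \<Rightarrow> bool" where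
  "class_M_plus_inf \<psi> \<longleftrightarrow> class_M \<psi> \<and> mono_on {1..} (mu \<psi>) \<and> filterlim (mu \<psi>) at_top at_top"

definition right_deriv :: "(real \<Rightarrow> real) \<Rightarrow> real \<Rightarrow> real" where
  "right_deriv f t = Lim (at_right t) (\<lambda>s. (f s - f t) / (s - t))"

end

theory Submission
  imports Defs
begin

lemma M_ev_below:
  assumes "class_M \<psi>" "c > 0"
  shows "\<exists>z>y. \<psi> z < c"
proof -
  have "(\<psi> \<longlongrightarrow> 0) at_top" using assms(1) by (simp add: class_M_def)
  then have "eventually (\<lambda>z. \<psi> z < c) at_top" using assms(2) by (simp add: order_tendstoD(2))
  moreover have "eventually (\<lambda>z. z > y) at_top" by (rule eventually_gt_at_top)
  ultimately have "eventually (\<lambda>z. z > y \<and> \<psi> z < c) at_top" by (rule eventually_conj[rotated])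
  then obtain N where "\<And>z. z \<ge> N \<Longrightarrow> z > y \<and> \<psi> z < c" by (auto simp: eventually_at_top_linorder)
  then show ?thesis by (meson order_refl)
qed

lemma M_decr:
  assumes M: "class_M \<psi>" and x: "1 \<le> x" "x < y"
  shows "\<psi> y < \<psi> x"
proof (rule ccontr)
  assume "\<not> \<psi> y < \<psi> x"
  then have ge: "\<psi> y \<ge> \<psi> x" by simp
  have cv: "convex_on {1..} \<psi>" and pos: "\<psi> x > 0" using M x by (auto simp: class_M_def)
  obtain z where z: "z > y" "\<psi> z < \<psi> x" using M_ev_below[OF M pos] by blast
  have "(\<psi> x - \<psi> y) / (x - y) \<le> (\<psi> x - \<psi> z) / (x - z)"
    using convex_on_slope_le(1)[OF cv, of x z y] x z by auto
  moreover have "(\<psi> x - \<psi> y) / (x - y) \<ge> 0"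
    using ge x by (intro divide_nonpos_neg) auto
  ultimately have "(\<psi> x - \<psi> z) / (x - z) \<ge> 0" by linarith
  moreover have "(\<psi> x - \<psi> z) / (x - z) < 0"
    using z x by (intro divide_pos_neg) auto
  ultimately show False by linarith
qed

lemma M_eta:
  assumes M: "class_M \<psi>" and x: "1 \<le> x"
  shows "eta \<psi> x > x \<and> \<psi> (eta \<psi> x) = \<psi> x / 2"
proof -
  have pos: "\<psi> x > 0" and cont: "continuous_on {1..} \<psi>" using M x by (auto simp: class_M_def)
  obtain z where z: "z > x" "\<psi> z < \<psi> x / 2" using M_ev_below[OF M, of "\<psi> x / 2" x] pos by auto
  have "continuous_on {x..z} \<psi>" using x by (intro continuous_on_subset[OF cont]) auto
  then obtain s where s: "x \<le> s" "s \<le> z" "\<psi> s = \<psi> x / 2"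
    using IVT2'[of \<psi> z "\<psi> x / 2" x] z pos by auto
  have inj: "inj_on \<psi> {1..}"
  proof (rule inj_onI)
    fix a b assume "a \<in> {1..}" "b \<in> {1..}" "\<psi> a = \<psi> b"
    then show "a = b" using M_decr[OF M, of a b] M_decr[OF M, of b a]
      by (cases a b rule: linorder_cases) auto
  qed
  have "eta \<psi> x = s" using s x the_inv_into_f_f[OF inj, of s] unfolding eta_def s(3) by simp
  moreover have "s \<noteq> x" using s pos by auto
  ultimately show ?thesis using s by auto
qed

theorem lemma2:
  fixes \<psi> :: "real \<Rightarrow> real" and b t :: real
  assumes "class_M_plus_inf \<psi>" and "b > 0" and "t \<ge> 1" and "mu \<psi> t \<ge> b"
  shows "1/2 * (b^2 / (b+1)^2) * (eta \<psi> t - t) \<le> \<psi> t / \<bar>right_deriv \<psi> t\<bar>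
       \<and> \<psi> t / \<bar>right_deriv \<psi> t\<bar> \<le> 4 * (1 + 1/b) * (eta \<psi> t - t)"
proof -
  have M: "class_M \<psi>" and mono: "mono_on {1..} (mu \<psi>)" using assms(1) by (auto simp: class_M_plus_inf_def)
  have cv: "convex_on {1..} \<psi>" using M by (simp add: class_M_def)
  define e where "e = eta \<psi> t"
  define d where "d = e - t"
  define P where "P = \<psi> t"
  have P: "P > 0" using M assms(3) by (simp add: class_M_def P_def)
  have et: "e > t" "\<psi> e = P / 2" using M_eta[OF M assms(3)] by (auto simp: e_def P_def)
  have d: "d > 0" using et by (simp add: d_def)
  have mut: "mu \<psi> t = t / d" by (simp add: mu_def d_def e_def)
  define q where "q = (\<lambda>s. (\<psi> s - \<psi> t) / (s - t))"
  define A where "A = e * P / (t * d)"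
  have qmono: "q a \<le> q c" if "t < a" "a \<le> c" for a c
  proof (cases "a = c")
    case False
    then have "(\<psi> t - \<psi> a) / (t - a) \<le> (\<psi> t - \<psi> c) / (t - c)"
      using convex_on_slope_le(1)[OF cv, of t c a] that assms(3) by auto
    then show ?thesis unfolding q_def
      by (metis minus_diff_eq minus_divide_divide)
  qed simp
  have qe: "q e = - P / (2 * d)" using et d by (simp add: q_def d_def P_def field_simps)
  have qlow: "q s \<ge> - A" if s: "s > t" for s
  proof -
    define h where "h = s - t"
    have h: "h > 0" using s by (simp add: h_def)
    define e' where "e' = eta \<psi> s"
    have es: "e' > s" "\<psi> e' = \<psi> s / 2" using M_eta[OF M, of s] s assms(3) by (auto simp: e'_def)
    have "mu \<psi> t \<le> mu \<psi> s" using mono s assms(3) by (auto intro: mono_onD)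
    then have "t / d \<le> s / (e' - s)" by (simp add: mut mu_def e'_def d_def e_def)
    then have "t * (e' - s) \<le> s * d" using d es assms(3) s
      by (simp add: field_simps)
    then have "e' - s \<le> s * d / t" using assms(3) by (simp add: field_simps)
    define k where "k = h * e / t"
    have k: "k > 0" using h et assms(3) by (simp add: k_def)
    have e'le: "e' \<le> e + k"
    proof -
      have "s + s * d / t = e + k" using assms(3)
        by (simp add: k_def h_def d_def field_simps)
      then show ?thesis using \<open>e' - s \<le> s * d / t\<close> by linarith
    qed
    have "\<psi> (e + k) \<le> \<psi> e'"
    proof (cases "e' = e + k")
      case False
      then show ?thesis using M_decr[OF M, of e' "e+k"] e'le es s assms(3) by auto
    qed simp
    have "(\<psi> t - \<psi> e) / (t - e) \<le> (\<psi> t - \<psi> (e + k)) / (t - (e + k))"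
      using convex_on_slope_le(1)[OF cv, of t "e+k" e] assms(3) et k by auto
    then have "- P / (2 * d) \<le> (\<psi> (e + k) - P) / (d + k)"
      using et d k by (simp add: d_def P_def field_simps)
    then have "- P * (d + k) \<le> (\<psi> (e + k) - P) * (2 * d)"
      using d k by (simp add: field_simps)
    then have h1: "P * d \<le> P * k + d * (2 * \<psi> (e + k))" by (simp add: field_simps)
    have "2 * \<psi> (e + k) \<le> \<psi> s" using \<open>\<psi> (e + k) \<le> \<psi> e'\<close> es by simp
    then have "d * (2 * \<psi> (e + k)) \<le> d * \<psi> s" using d by (intro mult_left_mono) auto
    then have "P * d \<le> P * k + d * \<psi> s" using h1 by linarith
    then have "\<psi> s \<ge> P - k * P / d"
      using d by (simp add: field_simps)
    then have "\<psi> s - P \<ge> - h * (e * P / (t * d))"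
      using assms(3) by (simp add: k_def field_simps)
    then have "(\<psi> s - P) / h \<ge> - (e * P / (t * d))"
      using h by (simp add: field_simps)
    then show ?thesis by (simp add: q_def A_def h_def P_def)
  qed
  have lim: "(q \<longlongrightarrow> Inf (q ` ({t<..} \<inter> UNIV))) (at t within ({t<..} \<inter> UNIV))"
    by (rule Lim_right_bound[where K = "-A"]) (auto intro: qmono qlow)
  then have lim': "(q \<longlongrightarrow> Inf (q ` {t<..})) (at_right t)" by simp
  have rd: "right_deriv \<psi> t = Inf (q ` {t<..})"
    unfolding right_deriv_def q_def[symmetric]
    using tendsto_Lim[OF trivial_limit_at_right_real lim'] .
  define L where "L = right_deriv \<psi> t"
  have "eventually (\<lambda>s. q s \<le> - P / (2 * d)) (at_right t)"
    unfolding eventually_at_right[OF et(1)]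
  proof (intro exI[of _ e] conjI allI impI)
    fix y assume "t < y" "y < e"
    then show "q y \<le> - P / (2 * d)" using qmono[of y e] qe by simp
  qed (rule et(1))
  then have Lup: "L \<le> - P / (2 * d)"
    using tendsto_upperbound[OF lim'] by (simp add: rd L_def)
  have "eventually (\<lambda>s. q s \<ge> - A) (at_right t)"
    unfolding eventually_at_right[OF et(1)]
  proof (intro exI[of _ e] conjI allI impI)
    fix y assume "t < y" "y < e"
    then show "q y \<ge> - A" using qlow[of y] by simp
  qed (rule et(1))
  then have Llow: "L \<ge> - A"
    using tendsto_lowerbound[OF lim'] by (simp add: rd L_def)
  have A: "A > 0" using et d P assms(3) by (simp add: A_def)
  have "- P / (2 * d) < 0" using P d by simp
  then have Lneg: "L < 0" using Lup by linarith
  have absL: "\<bar>L\<bar> = - L" using Lneg by simp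
  have "P / (2 * d) \<le> - L" using Lup by simp
  then have "P \<le> (- L) * (2 * d)" using d by (simp add: pos_divide_le_eq)
  moreover have "0 < - L" using Lneg by simp
  ultimately have up: "P / (- L) \<le> 2 * d"
    by (metis mult.commute pos_divide_le_eq)
  have "- L \<le> A" using Llow by simp
  moreover have "0 < A * (- L)" using A Lneg by (simp add: mult_pos_neg)
  ultimately have low: "P / A \<le> P / (- L)"
    using P by (intro divide_left_mono) auto
  have PA: "P / A = t * d / e" using P d et by (simp add: A_def field_simps)
  have tb: "b * d \<le> t" using assms(4) mut d by (simp add: le_divide_eq)
  have "b * e \<le> t * (b + 1)" using tb by (simp add: d_def algebra_simps)
  then have r1: "b / (b + 1) \<le> t / e"
    using assms(2) et assms(3) by (simp add: divide_simps)
  have "b^2 \<le> 2 * b * (b + 1)" using assms(2) by (simp add: power2_eq_square algebra_simps)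
  then have r2: "1/2 * (b^2 / (b+1)^2) \<le> b / (b + 1)"
    using assms(2) by (simp add: divide_simps power2_eq_square)
  have "1/2 * (b^2 / (b+1)^2) * d \<le> t / e * d"
    using r1 r2 d by (intro mult_right_mono) auto
  also have "t / e * d = P / A" using PA by simp
  finally have fin1: "1/2 * (b^2 / (b+1)^2) * d \<le> P / (- L)" using low by linarith
  have "2 * d \<le> 4 * (1 + 1/b) * d" using d assms(2) by (simp add: field_simps)
  moreover have eq1: "\<psi> t / \<bar>right_deriv \<psi> t\<bar> = P / (- L)"
    using absL by (simp add: P_def L_def)
  moreover have eq2: "eta \<psi> t - t = d" by (simp add: d_def e_def)
  ultimately show ?thesis unfolding eq1 eq2 using fin1 up by linarith
qed

end
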